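(* Let $S$ be a semigroup with finite $\mathcal{R}$-height, and let $A$ be an ideal of $S$. Let $n$ be the maximum length of a chain of $\mathcal{R}$-classes of $S$ that are contained in $A$. Then $\mathrm{H}_{\mathcal{R}}(A)\leq n$.
   Context: For a semigroup $S$, $S^1$ denotes $S$ with an identity adjoined if necessary. Green's preorder: $a\leq_{\mathcal{R}} b$ iff $aS^1\subseteq bS^1$; $\mathcal{R}$ is the associated equivalence. $\mathcal{R}$-classes are ordered by $R_a\leq R_b$ iff $a\leq_{\mathcal{R}} b$, and the $\mathcal{R}$-height $\mathrm{H}_{\mathcal{R}}(S)$ is the supremum of the cardinalities of chains of $\mathcal{R}$-classes. An ideal is a non-empty subset $A$ with $SA\cup AS\subseteq A$; $\mathrm{H}_{\mathcal{R}}(A)$ is computed in the semigroup $A$ itself. *)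

theory Defs
  imports Main "HOL-Library.Extended_Nat"
begin

text \<open>Green's notions are relativised to a subsemigroup given by a carrier set T
  (T = UNIV gives S itself; T = A gives the ideal A as a semigroup).
  a \<le>_R b in T iff a T^1 \<subseteq> b T^1 iff a = b or a = b t for some t in T.\<close>

definition R_le :: "'a::semigroup_mult set \<Rightarrow> 'a \<Rightarrow> 'a \<Rightarrow> bool" where
  "R_le T a b \<longleftrightarrow> a = b \<or> (\<exists>t\<in>T. a = b * t)"

definition R_eq :: "'a::semigroup_mult set \<Rightarrow> 'a \<Rightarrow> 'a \<Rightarrow> bool" where
  "R_eq T a b \<longleftrightarrow> R_le T a b \<and> R_le T b a"

definition R_class :: "'a::semigroup_mult set \<Rightarrow> 'a \<Rightarrow> 'a set" where
  "R_class T a = {b \<in> T. R_eq T a b}"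

definition R_classes :: "'a::semigroup_mult set \<Rightarrow> 'a set set" where
  "R_classes T = R_class T ` T"

definition R_class_le :: "'a::semigroup_mult set \<Rightarrow> 'a set \<Rightarrow> 'a set \<Rightarrow> bool" where
  "R_class_le T X Y \<longleftrightarrow> (\<forall>x\<in>X. \<forall>y\<in>Y. R_le T x y)"

definition R_chain :: "'a::semigroup_mult set \<Rightarrow> 'a set set \<Rightarrow> bool" where
  "R_chain T C \<longleftrightarrow> C \<subseteq> R_classes T \<and>
     (\<forall>X\<in>C. \<forall>Y\<in>C. R_class_le T X Y \<or> R_class_le T Y X)"

text \<open>R-height: supremum of cardinalities of chains of R-classes (in enat;
  an infinite chain has arbitrarily large finite subchains, so taking the
  supremum over finite chains gives the same value).\<close>
definition R_height :: "'a::semigroup_mult set \<Rightarrow> enat" where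
  "R_height T = Sup {enat (card C) | C. finite C \<and> R_chain T C}"

definition is_ideal :: "'a::semigroup_mult set \<Rightarrow> bool" where
  "is_ideal A \<longleftrightarrow> A \<noteq> {} \<and> (\<forall>s a. a \<in> A \<longrightarrow> s * a \<in> A \<and> a * s \<in> A)"

end

theory Submission
  imports Defs
begin

lemma Rle_refl: "R_le T a a" by (simp add: R_le_def)

lemma Rle_trans:
  assumes cl: "\<And>x y. x \<in> T \<Longrightarrow> y \<in> T \<Longrightarrow> x * y \<in> T"
    and "R_le T a b" "R_le T b c" shows "R_le T a c"
  using assms unfolding R_le_def by (metis cl mult.assoc)

lemma Rle_mono: "R_le A a b \<Longrightarrow> R_le UNIV a b"
  unfolding R_le_def by blast

lemma ideal_cl: "is_ideal A \<Longrightarrow> x \<in> A \<Longrightarrow> y \<in> A \<Longrightarrow> x * y \<in> A"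
  unfolding is_ideal_def by blast

lemma key:
  assumes I: "is_ideal A" and "R_le A a b" "R_le UNIV b a" "b \<in> A"
  shows "R_le A b a"
proof -
  from assms(2) consider "a = b" | t where "t \<in> A" "a = b * t" unfolding R_le_def by blast
  then show ?thesis
  proof cases
    case 1 then show ?thesis by (simp add: Rle_refl)
  next
    case 2
    from assms(3) consider "b = a" | s where "b = a * s" unfolding R_le_def by blast
    then show ?thesis
    proof cases
      case 1 then show ?thesis by (simp add: Rle_refl)
    next
      case (2 s)
      have "b = a * (s * t * s)" using 2 \<open>a = b * t\<close> by (metis mult.assoc)
      moreover have "s * t * s \<in> A" using I \<open>t \<in> A\<close> unfolding is_ideal_def by blast
      ultimately show ?thesis unfolding R_le_def by blast
    qed
  qed
qed

lemma class_eq_iff: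
  assumes cl: "\<And>x y. x \<in> T \<Longrightarrow> y \<in> T \<Longrightarrow> x * y \<in> T" and "x \<in> T" "y \<in> T"
  shows "R_class T x = R_class T y \<longleftrightarrow> R_eq T x y"
proof
  assume "R_class T x = R_class T y"
  moreover have "x \<in> R_class T x" using assms(2) unfolding R_class_def R_eq_def by (simp add: Rle_refl)
  ultimately have "x \<in> R_class T y" by simp
  then show "R_eq T x y" by (simp add: R_class_def R_eq_def)
next
  assume "R_eq T x y"
  then show "R_class T x = R_class T y" unfolding R_class_def R_eq_def
    using Rle_trans[OF cl] by blast
qed

lemma ideal_class_sub:
  assumes "is_ideal A" "x \<in> A" shows "R_class UNIV x \<subseteq> A"
proof
  fix y assume "y \<in> R_class UNIV x"
  then have "y = x \<or> (\<exists>t. y = x * t)" unfolding R_class_def R_eq_def R_le_def by auto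
  then show "y \<in> A" using assms unfolding is_ideal_def by auto
qed

theorem theorem3p14:
  fixes A :: "'a::semigroup_mult set"
  assumes "R_height (UNIV :: 'a set) < \<infinity>"
    and "is_ideal A"
  shows "R_height A \<le>
    Sup {enat (card C) | C. finite C \<and> R_chain (UNIV :: 'a set) C \<and> (\<forall>X\<in>C. X \<subseteq> A)}"
  unfolding R_height_def
proof (rule Sup_least)
  note I = assms(2)
  have clA: "\<And>x y. x \<in> A \<Longrightarrow> y \<in> A \<Longrightarrow> x * y \<in> A" using ideal_cl[OF I] .
  have clU: "\<And>x y. x \<in> (UNIV::'a set) \<Longrightarrow> y \<in> UNIV \<Longrightarrow> x * y \<in> UNIV" by simp
  fix e assume "e \<in> {enat (card C) | C. finite C \<and> R_chain A C}"
  then obtain C where e: "e = enat (card C)" and fin: "finite C" and ch: "R_chain A C" by blast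
  define rep where "rep X = (SOME x. x \<in> A \<and> X = R_class A x)" for X
  have rep: "rep X \<in> A \<and> X = R_class A (rep X)" if "X \<in> C" for X
  proof -
    have "X \<in> R_classes A" using ch that unfolding R_chain_def by blast
    then have "\<exists>x. x \<in> A \<and> X = R_class A x" unfolding R_classes_def by blast
    then show ?thesis unfolding rep_def by (rule someI_ex)
  qed
  have repin: "rep X \<in> X" if "X \<in> C" for X
  proof -
    have a: "rep X \<in> A" and b: "X = R_class A (rep X)" using rep[OF that] by auto
    have "rep X \<in> R_class A (rep X)" using a unfolding R_class_def R_eq_def by (simp add: Rle_refl)
    then show ?thesis using b by simp
  qed
  have cmp: "R_le A (rep X) (rep Y) \<or> R_le A (rep Y) (rep X)" if "X \<in> C" "Y \<in> C" for X Y
    using ch that repin unfolding R_chain_def R_class_le_def by blast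
  define g where "g X = R_class UNIV (rep X)" for X
  have inj: "inj_on g C"
  proof (rule inj_onI)
    fix X Y assume XY: "X \<in> C" "Y \<in> C" "g X = g Y"
    have eqU: "R_eq UNIV (rep X) (rep Y)"
      using class_eq_iff[OF clU, of "rep X" "rep Y"] XY(3) unfolding g_def by simp
    have rX: "rep X \<in> A" "X = R_class A (rep X)" using rep[OF XY(1)] by auto
    have rY: "rep Y \<in> A" "Y = R_class A (rep Y)" using rep[OF XY(2)] by auto
    have "R_eq A (rep X) (rep Y)"
    proof (cases "R_le A (rep X) (rep Y)")
      case True
      moreover have "R_le UNIV (rep Y) (rep X)" using eqU unfolding R_eq_def by simp
      ultimately show ?thesis using key[OF I] rY(1) unfolding R_eq_def by blast
    next
      case False
      then have "R_le A (rep Y) (rep X)" using cmp[OF XY(1,2)] by simp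
      moreover have "R_le UNIV (rep X) (rep Y)" using eqU unfolding R_eq_def by simp
      ultimately show ?thesis using key[OF I] rX(1) unfolding R_eq_def by blast
    qed
    then have "R_class A (rep X) = R_class A (rep Y)" using class_eq_iff[OF clA rX(1) rY(1)] by simp
    then show "X = Y" using rX(2) rY(2) by simp
  qed
  have "R_chain UNIV (g ` C)"
    unfolding R_chain_def
  proof (intro conjI ballI)
    show "g ` C \<subseteq> R_classes UNIV" unfolding g_def R_classes_def by blast
  next
    fix X' Y' assume "X' \<in> g ` C" "Y' \<in> g ` C"
    then obtain X Y where XY: "X \<in> C" "Y \<in> C" "X' = g X" "Y' = g Y" by blast
    have tr: "R_class_le UNIV (R_class UNIV a) (R_class UNIV b)" if "R_le UNIV a b" for a b
    proof -
      have trU: "R_le UNIV p q \<Longrightarrow> R_le UNIV q r \<Longrightarrow> R_le UNIV p r" for p q r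
        by (rule Rle_trans[of UNIV]) auto
      show ?thesis unfolding R_class_le_def
      proof (intro ballI)
        fix x y assume "x \<in> R_class UNIV a" "y \<in> R_class UNIV b"
        then have "R_le UNIV x a" "R_le UNIV b y" unfolding R_class_def R_eq_def by auto
        then show "R_le UNIV x y" using trU that by metis
      qed
    qed
    show "R_class_le UNIV X' Y' \<or> R_class_le UNIV Y' X'"
    proof (cases "R_le A (rep X) (rep Y)")
      case True
      then have "R_class_le UNIV (g X) (g Y)" unfolding g_def by (intro tr Rle_mono)
      then show ?thesis using XY(3,4) by simp
    next
      case False
      then have "R_le A (rep Y) (rep X)" using cmp[OF XY(1,2)] by simp
      then have "R_class_le UNIV (g Y) (g X)" unfolding g_def by (intro tr Rle_mono)
      then show ?thesis using XY(3,4) by simp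
    qed
  qed
  moreover have "\<forall>X\<in>g ` C. X \<subseteq> A"
  proof
    fix X' assume "X' \<in> g ` C"
    then obtain X where "X \<in> C" "X' = g X" by blast
    then show "X' \<subseteq> A" using ideal_class_sub[OF I] rep unfolding g_def by blast
  qed
  moreover have "card (g ` C) = card C" using card_image[OF inj] .
  ultimately have "e \<in> {enat (card C) | C. finite C \<and> R_chain (UNIV :: 'a set) C \<and> (\<forall>X\<in>C. X \<subseteq> A)}"
  proof -
    assume h: "R_chain UNIV (g ` C)" "\<forall>X\<in>g ` C. X \<subseteq> A" "card (g ` C) = card C"
    have "e = enat (card (g ` C)) \<and> finite (g ` C) \<and> R_chain UNIV (g ` C) \<and> (\<forall>X\<in>g ` C. X \<subseteq> A)"
      using h e fin by simp
    then show ?thesis by blast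
  qed
  then show "e \<le> Sup {enat (card C) | C. finite C \<and> R_chain (UNIV :: 'a set) C \<and> (\<forall>X\<in>C. X \<subseteq> A)}"
    by (rule Sup_upper)
qed

end
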